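(* Let $G$ be a finite group. Then $G$ is an elementary abelian $2$-group if and only if the set of maximal sum-free sets in $G$ coincides with the set $\{G\setminus M : M \text{ a maximal subgroup of } G\}$ of complements of the maximal subgroups of $G$, and $\Phi(G)=1$, where $\Phi(G)$ is the Frattini subgroup of $G$ (the intersection of all maximal subgroups of $G$).
   Context: A non-empty subset $S$ of a group $G$ is called sum-free if for all $s_1,s_2\in S$ (including the case $s_1=s_2$) one has $s_1s_2\notin S$. A maximal sum-free set in a finite group $G$ means a sum-free set of largest possible cardinality among all sum-free sets in $G$ (maximal by cardinality). *)

theory Defs
  imports "HOL-Algebra.Algebra"
begin

definition sum_free :: "('a, 'b) monoid_scheme \<Rightarrow> 'a set \<Rightarrow> bool" where
  "sum_free G S \<longleftrightarrow> S \<noteq> {} \<and> S \<subseteq> carrier G \<and>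
     (\<forall>s1\<in>S. \<forall>s2\<in>S. s1 \<otimes>\<^bsub>G\<^esub> s2 \<notin> S)"

definition max_sum_free :: "('a, 'b) monoid_scheme \<Rightarrow> 'a set \<Rightarrow> bool" where
  "max_sum_free G S \<longleftrightarrow> sum_free G S \<and> (\<forall>T. sum_free G T \<longrightarrow> card T \<le> card S)"

definition maximal_subgroup :: "'a set \<Rightarrow> ('a, 'b) monoid_scheme \<Rightarrow> bool" where
  "maximal_subgroup M G \<longleftrightarrow> subgroup M G \<and> M \<noteq> carrier G \<and>
     (\<forall>K. subgroup K G \<and> M \<subseteq> K \<longrightarrow> K = M \<or> K = carrier G)"

text \<open>Frattini subgroup: intersection of all maximal subgroups (the whole group if there are none).\<close>
definition frattini :: "('a, 'b) monoid_scheme \<Rightarrow> 'a set" where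
  "frattini G = carrier G \<inter> \<Inter> {M. maximal_subgroup M G}"

definition elementary_abelian_2_group :: "('a, 'b) monoid_scheme \<Rightarrow> bool" where
  "elementary_abelian_2_group G \<longleftrightarrow> comm_group G \<and>
     (\<forall>x\<in>carrier G. x \<otimes>\<^bsub>G\<^esub> x = \<one>\<^bsub>G\<^esub>)"

end

theory Submission
  imports Defs
begin

locale ea2 = comm_group +
  assumes sq: "x \<in> carrier G \<Longrightarrow> x \<otimes> x = \<one>"
    and fin: "finite (carrier G)"
begin

lemma inv_self: "x \<in> carrier G \<Longrightarrow> inv x = x"
  using sq by (simp add: inv_char)

lemma card_img: "A \<subseteq> carrier G \<Longrightarrow> s \<in> carrier G \<Longrightarrow> card ((\<otimes>) s ` A) = card A"
  by (rule card_image) (auto simp: inj_on_def subsetD)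

lemma L0:
  assumes K: "subgroup K G" and g: "g \<in> carrier G"
  shows "subgroup (K \<union> (\<otimes>) g ` K) G"
proof (rule subgroupI)
  have Kc: "K \<subseteq> carrier G" using K subgroup.subset by blast
  show "K \<union> (\<otimes>) g ` K \<subseteq> carrier G" using Kc g by auto
  show "K \<union> (\<otimes>) g ` K \<noteq> {}" using K subgroup.one_closed by blast
  fix a assume a: "a \<in> K \<union> (\<otimes>) g ` K"
  then have "a \<in> carrier G" using Kc g by auto
  then show "inv a \<in> K \<union> (\<otimes>) g ` K" using a inv_self by simp
next
  have Kc: "K \<subseteq> carrier G" using K subgroup.subset by blast
  fix a b assume a: "a \<in> K \<union> (\<otimes>) g ` K" and b: "b \<in> K \<union> (\<otimes>) g ` K"
  show "a \<otimes> b \<in> K \<union> (\<otimes>) g ` K"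
  proof (cases "a \<in> K")
    case True
    show ?thesis
    proof (cases "b \<in> K")
      case True with \<open>a \<in> K\<close> show ?thesis using subgroup.m_closed[OF K] by simp
    next
      case False
      then obtain k where k: "k \<in> K" "b = g \<otimes> k" using b by auto
      have ac: "a \<in> carrier G" "k \<in> carrier G" using k True Kc by auto
      have "a \<otimes> b = g \<otimes> (a \<otimes> k)" using ac g k(2) by (simp add: m_lcomm)
      moreover have "a \<otimes> k \<in> K" using subgroup.m_closed[OF K True k(1)] .
      ultimately show ?thesis by simp
    qed
  next
    case False
    then obtain k where k: "k \<in> K" "a = g \<otimes> k" using a by auto
    show ?thesis
    proof (cases "b \<in> K")
      case True
      have bc: "b \<in> carrier G" "k \<in> carrier G" using k True Kc by auto
      have "a \<otimes> b = g \<otimes> (k \<otimes> b)" using bc g k(2) by (simp add: m_assoc)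
      moreover have "k \<otimes> b \<in> K" using subgroup.m_closed[OF K k(1) True] .
      ultimately show ?thesis by simp
    next
      case False
      then obtain k' where k': "k' \<in> K" "b = g \<otimes> k'" using b by auto
      have kc: "k \<in> carrier G" "k' \<in> carrier G" using k k' Kc by auto
      have "a \<otimes> b = (g \<otimes> g) \<otimes> (k \<otimes> k')" using k k' kc g by (simp add: m_ac)
      also have "\<dots> = k \<otimes> k'" using g kc sq by simp
      moreover have "k \<otimes> k' \<in> K" using subgroup.m_closed[OF K k(1) k'(1)] .
      ultimately show ?thesis by simp
    qed
  qed
qed

lemma L3:
  assumes T: "sum_free G T"
  shows "2 * card T \<le> card (carrier G)"
proof -
  from T obtain s where s: "s \<in> T" unfolding sum_free_def by blast
  have Tc: "T \<subseteq> carrier G" using T unfolding sum_free_def by blast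
  have sc: "s \<in> carrier G" using s Tc by blast
  have disj: "(\<otimes>) s ` T \<inter> T = {}" using T s unfolding sum_free_def by blast
  have sub: "(\<otimes>) s ` T \<union> T \<subseteq> carrier G" using Tc sc by auto
  have fT: "finite T" using Tc fin finite_subset by blast
  have "card ((\<otimes>) s ` T \<union> T) = card T + card T"
    using card_Un_disjoint[OF _ fT disj] fT card_img[OF Tc sc] by simp
  moreover have "card ((\<otimes>) s ` T \<union> T) \<le> card (carrier G)" using card_mono[OF fin sub] .
  ultimately show ?thesis by simp
qed

lemma L4:
  assumes S: "sum_free G S" and c: "2 * card S = card (carrier G)"
  shows "maximal_subgroup (carrier G - S) G"
proof -
  define M where "M = carrier G - S"
  have Sc: "S \<subseteq> carrier G" using S unfolding sum_free_def by blast
  have fS: "finite S" using Sc fin finite_subset by blast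
  have cM: "card M = card S" unfolding M_def using card_Diff_subset[OF fS Sc] c by simp
  have key: "(\<otimes>) s ` S = M" if s: "s \<in> S" for s
  proof -
    have sc: "s \<in> carrier G" using s Sc by blast
    have "(\<otimes>) s ` S \<subseteq> M" unfolding M_def using S s Sc sc unfolding sum_free_def by auto
    moreover have "card ((\<otimes>) s ` S) = card M" using card_img[OF Sc sc] cM by simp
    moreover have "finite M" unfolding M_def using fin by simp
    ultimately show ?thesis using card_subset_eq by blast
  qed
  obtain s0 where s0: "s0 \<in> S" using S unfolding sum_free_def by blast
  have one: "\<one> \<notin> S"
  proof
    assume "\<one> \<in> S"
    then have "\<one> \<otimes> \<one> \<notin> S" using S unfolding sum_free_def by blast
    with \<open>\<one> \<in> S\<close> show False by simp
  qed
  have subM: "subgroup M G"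
  proof (rule subgroupI)
    show "M \<subseteq> carrier G" unfolding M_def by blast
    show "M \<noteq> {}" using one unfolding M_def by blast
    fix a assume "a \<in> M" then show "inv a \<in> M" using inv_self unfolding M_def by auto
  next
    fix a b assume a: "a \<in> M" and b: "b \<in> M"
    have a': "a \<in> (\<otimes>) s0 ` S" using a key[OF s0] by simp
    have b': "b \<in> (\<otimes>) s0 ` S" using b key[OF s0] by simp
    obtain t where t: "t \<in> S" "a = s0 \<otimes> t" using a' by (rule imageE) simp
    obtain u where u: "u \<in> S" "b = s0 \<otimes> u" using b' by (rule imageE) simp
    have c3: "s0 \<in> carrier G" "t \<in> carrier G" "u \<in> carrier G" using t u s0 Sc by auto
    have "a \<otimes> b = (s0 \<otimes> s0) \<otimes> (t \<otimes> u)" using t u c3 by (simp add: m_ac)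
    also have "\<dots> = t \<otimes> u" using c3 sq by simp
    finally have "a \<otimes> b = t \<otimes> u" .
    then have "a \<otimes> b \<in> (\<otimes>) t ` S" using u(1) by simp
    then show "a \<otimes> b \<in> M" using key[OF t(1)] by simp
  qed
  have "M \<noteq> carrier G" using s0 Sc unfolding M_def by blast
  moreover have "K = M \<or> K = carrier G" if K: "subgroup K G" "M \<subseteq> K" for K
  proof (cases "K = M")
    case False
    then obtain s where s: "s \<in> K" "s \<notin> M" using K by blast
    have Kc: "K \<subseteq> carrier G" using K subgroup.subset by blast
    have sS: "s \<in> S" using s Kc unfolding M_def by blast
    have sc: "s \<in> carrier G" using s Kc by blast
    have "carrier G \<subseteq> K"
    proof
      fix y assume y: "y \<in> carrier G"
      show "y \<in> K"
      proof (cases "y \<in> M")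
        case True then show ?thesis using K by blast
      next
        case False
        then have yS: "y \<in> S" using y unfolding M_def by blast
        have "s \<otimes> y \<in> (\<otimes>) s ` S" using yS by simp
        then have "s \<otimes> y \<in> M" using key[OF sS] by simp
        then have "s \<otimes> y \<in> K" using K(2) by (rule subsetD[rotated])
        then have "s \<otimes> (s \<otimes> y) \<in> K" using subgroup.m_closed[OF K(1) s(1)] by simp
        moreover have "s \<otimes> (s \<otimes> y) = y" using sc y sq by (simp add: m_assoc[symmetric])
        ultimately show ?thesis by simp
      qed
    qed
    then show ?thesis using Kc by blast
  qed simp
  ultimately show ?thesis using subM unfolding maximal_subgroup_def M_def by blast
qed

lemma L5:
  assumes M: "maximal_subgroup M G"
  shows "sum_free G (carrier G - M) \<and> 2 * card (carrier G - M) = card (carrier G)"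
proof -
  have sM: "subgroup M G" and ne: "M \<noteq> carrier G" and mx: "\<And>K. subgroup K G \<Longrightarrow> M \<subseteq> K \<Longrightarrow> K = M \<or> K = carrier G"
    using M unfolding maximal_subgroup_def by auto
  have Mc: "M \<subseteq> carrier G" using sM subgroup.subset by blast
  obtain g where g: "g \<in> carrier G" "g \<notin> M" using ne Mc by blast
  have sK: "subgroup (M \<union> (\<otimes>) g ` M) G" using L0[OF sM g(1)] .
  have "g \<otimes> \<one> \<in> (\<otimes>) g ` M" using subgroup.one_closed[OF sM] by (rule imageI)
  then have "g \<in> (\<otimes>) g ` M" using g(1) by simp
  then have "M \<union> (\<otimes>) g ` M \<noteq> M" using g by blast
  then have K: "M \<union> (\<otimes>) g ` M = carrier G" using mx[OF sK] by blast
  have dis: "(\<otimes>) g ` M \<inter> M = {}"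
  proof (rule ccontr)
    assume "(\<otimes>) g ` M \<inter> M \<noteq> {}"
    then obtain m where m: "m \<in> M" "g \<otimes> m \<in> M" by blast
    have mc: "m \<in> carrier G" using m Mc by blast
    have "(g \<otimes> m) \<otimes> inv m \<in> M" using subgroup.m_closed[OF sM m(2) subgroup.m_inv_closed[OF sM m(1)]] .
    moreover have "(g \<otimes> m) \<otimes> inv m = g" using g mc by (simp add: m_assoc)
    ultimately show False using g by simp
  qed
  have eq: "carrier G - M = (\<otimes>) g ` M" using K dis by blast
  have fM: "finite M" using Mc fin finite_subset by blast
  have "card (carrier G) = card M + card (carrier G - M)"
    using card_Diff_subset[OF fM Mc] card_mono[OF fin Mc] by simp
  moreover have "card (carrier G - M) = card M" using eq card_img[OF Mc g(1)] by simp
  moreover have "sum_free G (carrier G - M)"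
    unfolding sum_free_def
  proof (intro conjI ballI)
    show "carrier G - M \<noteq> {}" using g by blast
    show "carrier G - M \<subseteq> carrier G" by blast
    fix a b assume a: "a \<in> carrier G - M" and b: "b \<in> carrier G - M"
    have a': "a \<in> (\<otimes>) g ` M" using a eq by simp
    have b': "b \<in> (\<otimes>) g ` M" using b eq by simp
    obtain k where k: "k \<in> M" "a = g \<otimes> k" using a' by (rule imageE) simp
    obtain k' where k': "k' \<in> M" "b = g \<otimes> k'" using b' by (rule imageE) simp
    have kc: "k \<in> carrier G" "k' \<in> carrier G" using k k' Mc by auto
    have "a \<otimes> b = (g \<otimes> g) \<otimes> (k \<otimes> k')" using k k' kc g by (simp add: m_ac)
    also have "\<dots> = k \<otimes> k'" using g kc sq by simp
    finally have "a \<otimes> b = k \<otimes> k'" .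
    moreover have "k \<otimes> k' \<in> M" using subgroup.m_closed[OF sM k(1) k'(1)] .
    ultimately show "a \<otimes> b \<notin> carrier G - M" by simp
  qed
  ultimately show ?thesis by simp
qed

lemma L6:
  assumes x: "x \<in> carrier G" "x \<noteq> \<one>"
  shows "\<exists>M. maximal_subgroup M G \<and> x \<notin> M"
proof -
  define P where "P = {K. subgroup K G \<and> x \<notin> K}"
  have fP: "finite P"
  proof -
    have "P \<subseteq> Pow (carrier G)" unfolding P_def using subgroup.subset by blast
    then show ?thesis using fin finite_subset by blast
  qed
  have "{\<one>} \<in> P" unfolding P_def using x by (simp add: triv_subgroup)
  then have neP: "card ` P \<noteq> {}" by blast
  define m where "m = Max (card ` P)"
  obtain K where K: "K \<in> P" "card K = m" using Max_in[OF _ neP] fP unfolding m_def by auto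
  have ge: "card K' \<le> card K" if "K' \<in> P" for K'
    using Max_ge[OF finite_imageI[OF fP]] that K unfolding m_def by auto
  have sK: "subgroup K G" and xK: "x \<notin> K" using K unfolding P_def by auto
  have Kc: "K \<subseteq> carrier G" using sK subgroup.subset by blast
  have finK: "\<And>K'. subgroup K' G \<Longrightarrow> finite K'" using fin subgroup.subset finite_subset by blast
  have big: "K = K'" if "subgroup K' G" "K \<subseteq> K'" "x \<notin> K'" for K'
  proof (rule ccontr)
    assume "K \<noteq> K'"
    then have "K \<subset> K'" using that by blast
    then have "card K < card K'" using psubset_card_mono[OF finK[OF that(1)]] by simp
    moreover have "K' \<in> P" using that unfolding P_def by blast
    ultimately show False using ge by fastforce
  qed
  have "maximal_subgroup K G"
    unfolding maximal_subgroup_def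
  proof (intro conjI allI impI)
    show "subgroup K G" using sK .
    show "K \<noteq> carrier G" using x xK by blast
    fix K' assume K': "subgroup K' G \<and> K \<subseteq> K'"
    show "K' = K \<or> K' = carrier G"
    proof (cases "x \<in> K'")
      case False then show ?thesis using big K' by blast
    next
      case True
      have "carrier G \<subseteq> K'"
      proof
        fix y assume y: "y \<in> carrier G"
        show "y \<in> K'"
        proof (cases "y \<in> K")
          case True then show ?thesis using K' by blast
        next
          case False
          have sub: "subgroup (K \<union> (\<otimes>) y ` K) G" using L0[OF sK y] .
          have "K \<union> (\<otimes>) y ` K \<noteq> K"
          proof -
            have "y \<otimes> \<one> \<in> (\<otimes>) y ` K" using subgroup.one_closed[OF sK] by (rule imageI)
            then have "y \<in> (\<otimes>) y ` K" using y by simp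
            then show ?thesis using False by blast
          qed
          then have "x \<in> K \<union> (\<otimes>) y ` K" using big[OF sub] by blast
          then obtain k where k: "k \<in> K" "x = y \<otimes> k" using xK by blast
          have kc: "k \<in> carrier G" using k Kc by blast
          have "x \<otimes> k = y \<otimes> (k \<otimes> k)" using k kc y by (simp add: m_assoc)
          also have "\<dots> = y" using kc y sq by simp
          finally have "y = x \<otimes> k" by simp
          moreover have "k \<in> K'" using k K' by blast
          moreover have "x \<otimes> k \<in> K'" using subgroup.m_closed[of K' G x k] True \<open>k \<in> K'\<close> K' by simp
          ultimately show ?thesis by simp
        qed
      qed
      then show ?thesis using K' subgroup.subset by blast
    qed
  qed
  then show ?thesis using xK by blast
qed

end

theorem theorem2:
  fixes G :: "('a, 'b) monoid_scheme"
  assumes "group G" and "finite (carrier G)"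
  shows "elementary_abelian_2_group G \<longleftrightarrow>
    ({S. max_sum_free G S} = {carrier G - M | M. maximal_subgroup M G} \<and>
     frattini G = {\<one>\<^bsub>G\<^esub>})"
proof
  assume E: "elementary_abelian_2_group G"
  interpret ea2 G
    using E assms unfolding elementary_abelian_2_group_def
    by (simp add: ea2_def ea2_axioms_def)
  have A: "{S. max_sum_free G S} = {carrier G - M | M. maximal_subgroup M G}"
  proof (rule subset_antisym; rule subsetI)
    fix S assume "S \<in> {S. max_sum_free G S}"
    then have S: "sum_free G S" and mx: "\<And>T. sum_free G T \<Longrightarrow> card T \<le> card S"
      unfolding max_sum_free_def by auto
    obtain s where s: "s \<in> S" using S unfolding sum_free_def by blast
    have sc: "s \<in> carrier G" using s S unfolding sum_free_def by blast
    have "s \<noteq> \<one>\<^bsub>G\<^esub>"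
    proof
      assume "s = \<one>\<^bsub>G\<^esub>"
      then have "s \<otimes>\<^bsub>G\<^esub> s \<in> S" using s by simp
      then show False using S s unfolding sum_free_def by blast
    qed
    then obtain M where M: "maximal_subgroup M G" using L6[OF sc] by blast
    have "2 * card (carrier G - M) = card (carrier G)" "card (carrier G - M) \<le> card S"
      using L5[OF M] mx by auto
    then have "2 * card S = card (carrier G)" using L3[OF S] by linarith
    then have "maximal_subgroup (carrier G - S) G" using L4[OF S] by blast
    moreover have "S = carrier G - (carrier G - S)" using S unfolding sum_free_def by blast
    ultimately show "S \<in> {carrier G - M | M. maximal_subgroup M G}" by blast
  next
    fix S assume "S \<in> {carrier G - M | M. maximal_subgroup M G}"
    then obtain M where M: "maximal_subgroup M G" "S = carrier G - M" by blast
    have sf: "sum_free G S" and c: "2 * card S = card (carrier G)" using L5[OF M(1)] M(2) by auto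
    have "card T \<le> card S" if "sum_free G T" for T using L3[OF that] c by linarith
    then show "S \<in> {S. max_sum_free G S}" using sf unfolding max_sum_free_def by blast
  qed
  have B: "frattini G = {\<one>\<^bsub>G\<^esub>}"
  proof
    show "frattini G \<subseteq> {\<one>\<^bsub>G\<^esub>}"
    proof
      fix y assume y: "y \<in> frattini G"
      show "y \<in> {\<one>\<^bsub>G\<^esub>}"
      proof (rule ccontr)
        assume "y \<notin> {\<one>\<^bsub>G\<^esub>}"
        then obtain M where "maximal_subgroup M G" "y \<notin> M" using L6 y unfolding frattini_def by blast
        then show False using y unfolding frattini_def by blast
      qed
    qed
    show "{\<one>\<^bsub>G\<^esub>} \<subseteq> frattini G"
      unfolding frattini_def maximal_subgroup_def using subgroup.one_closed by auto
  qed
  show "{S. max_sum_free G S} = {carrier G - M | M. maximal_subgroup M G} \<and> frattini G = {\<one>\<^bsub>G\<^esub>}"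
    using A B by simp
next
  assume H: "{S. max_sum_free G S} = {carrier G - M | M. maximal_subgroup M G} \<and>
     frattini G = {\<one>\<^bsub>G\<^esub>}"
  interpret group G using assms(1) .
  have sq: "x \<otimes>\<^bsub>G\<^esub> x = \<one>\<^bsub>G\<^esub>" if x: "x \<in> carrier G" for x
  proof -
    have "x \<otimes>\<^bsub>G\<^esub> x \<in> M" if M: "maximal_subgroup M G" for M
    proof (cases "x \<in> M")
      case True
      have "subgroup M G" using M unfolding maximal_subgroup_def by blast
      then show ?thesis using True True by (rule subgroup.m_closed)
    next
      case False
      have "carrier G - M \<in> {carrier G - M | M. maximal_subgroup M G}" using M by blast
      then have "carrier G - M \<in> {S. max_sum_free G S}" by (rule ssubst[OF conjunct1[OF H]])
      then have "sum_free G (carrier G - M)" unfolding max_sum_free_def by simp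
      then have "\<forall>s1\<in>carrier G - M. \<forall>s2\<in>carrier G - M. s1 \<otimes>\<^bsub>G\<^esub> s2 \<notin> carrier G - M"
        unfolding sum_free_def by (rule conjunct2[OF conjunct2])
      moreover have "x \<in> carrier G - M" using x False by simp
      ultimately have "x \<otimes>\<^bsub>G\<^esub> x \<notin> carrier G - M" by simp
      moreover have "x \<otimes>\<^bsub>G\<^esub> x \<in> carrier G" using x by simp
      ultimately show ?thesis by simp
    qed
    moreover have "x \<otimes>\<^bsub>G\<^esub> x \<in> carrier G" using x by simp
    ultimately have "x \<otimes>\<^bsub>G\<^esub> x \<in> frattini G" unfolding frattini_def by simp
    then show ?thesis using conjunct2[OF H] by simp
  qed
  have iv: "inv\<^bsub>G\<^esub> x = x" if "x \<in> carrier G" for x using sq that by (simp add: inv_char)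
  have "comm_group G"
  proof (rule group_comm_groupI)
    fix x y assume xy: "x \<in> carrier G" "y \<in> carrier G"
    have "x \<otimes>\<^bsub>G\<^esub> y = inv\<^bsub>G\<^esub> (x \<otimes>\<^bsub>G\<^esub> y)" using iv xy by simp
    also have "\<dots> = inv\<^bsub>G\<^esub> y \<otimes>\<^bsub>G\<^esub> inv\<^bsub>G\<^esub> x" using xy by (simp add: inv_mult_group)
    also have "\<dots> = y \<otimes>\<^bsub>G\<^esub> x" using iv xy by simp
    finally show "x \<otimes>\<^bsub>G\<^esub> y = y \<otimes>\<^bsub>G\<^esub> x" .
  qed
  then show "elementary_abelian_2_group G" unfolding elementary_abelian_2_group_def using sq by blast
qed

end
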